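(* Let $G$ be a compact group and let $X$ be a separable Banach space whose dual $X^*$ is strictly convex. Let $T$ be an isometric, invertible, left multiplier of $C(G,X)$. Then there exist an isometry $U$ of $X$ onto itself and $y\in G$ such that $T=U\circ R_y$, i.e. $(Tf)(s)=U(f(sy))$ for all $f\in C(G,X)$ and all $s\in G$.
   Context: $C(G,X)$ denotes the Banach space of continuous $X$-valued functions on $G$ with the supremum norm. For $g\in G$, $(L_gf)(s)=f(gs)$ and $(R_gf)(s)=f(sg)$. A left multiplier of $C(G,X)$ is a bounded linear operator on $C(G,X)$ commuting with every left translation $L_g$, $g\in G$. *)

theory Defs
  imports "HOL-Analysis.Analysis"
begin

definition strictly_convex :: "'a::real_normed_vector itself \<Rightarrow> bool" where
  "strictly_convex _ \<longleftrightarrow>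
     (\<forall>x y :: 'a. norm x = 1 \<and> norm y = 1 \<and> x \<noteq> y \<longrightarrow> norm ((1/2) *\<^sub>R (x + y)) < 1)"

text \<open>Left translation on C(G,X): (L_g f)(s) = f(g s); the group G is written additively
  (class topological_group_add, which does not require commutativity).\<close>
definition left_transl :: "'g::topological_group_add \<Rightarrow> ('g \<Rightarrow>\<^sub>C 'x::real_normed_vector) \<Rightarrow> ('g \<Rightarrow>\<^sub>C 'x)" where
  "left_transl g f = Bcontfun (\<lambda>s. apply_bcontfun f (g + s))"

definition left_multiplier :: "(('g::topological_group_add \<Rightarrow>\<^sub>C 'x::real_normed_vector) \<Rightarrow> ('g \<Rightarrow>\<^sub>C 'x)) \<Rightarrow> bool" where
  "left_multiplier T \<longleftrightarrow> bounded_linear T \<and> (\<forall>g f. T (left_transl g f) = left_transl g (T f))"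

end

theory Submission
  imports Defs
begin

lemma Hausdorff_t2: "Hausdorff_space (euclidean :: 'a::t2_space topology)"
  unfolding Hausdorff_space_def using separation_t2 by (auto simp: disjnt_def)

lemma urysohn_cpt:
  fixes S T :: "'a::t2_space set"
  assumes "compact (UNIV :: 'a set)" "closed S" "closed T" "S \<inter> T = {}"
  obtains f :: "'a \<Rightarrow> real" where "continuous_on UNIV f" "\<And>t. 0 \<le> f t \<and> f t \<le> 1"
    "\<And>t. t \<in> S \<Longrightarrow> f t = 0" "\<And>t. t \<in> T \<Longrightarrow> f t = 1"
proof -
  have "normal_space (euclidean :: 'a topology)"
    using assms(1) by (intro compact_Hausdorff_or_regular_imp_normal_space)
      (auto simp: compact_space_def Hausdorff_t2)
  then obtain f where f: "continuous_map euclidean (top_of_set {0..1::real}) f" "f ` S \<subseteq> {0}" "f ` T \<subseteq> {1}"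
    using Urysohn_lemma[of euclidean S T 0 1] assms by (auto simp: disjnt_def)
  have "continuous_on UNIV f" using f(1)
    by (metis continuous_map_in_subtopology continuous_map_iff_continuous2)
  moreover have "\<And>t. 0 \<le> f t \<and> f t \<le> 1" using f(1)
    by (auto simp: continuous_map_in_subtopology)
  ultimately show ?thesis
    apply (rule that)
    using f(2,3) by auto
qed

lemma cont_bcontfun:
  assumes "compact (UNIV :: 'a::topological_space set)" "continuous_on UNIV (h :: 'a \<Rightarrow> 'b::metric_space)"
  shows "h \<in> bcontfun"
proof -
  have "compact (range h)" using assms compact_continuous_image by blast
  then show ?thesis using assms by (auto simp: bcontfun_def compact_imp_bounded)
qed


definition hbset :: "'x::real_normed_vector \<Rightarrow> ('x \<times> real) set set" where
  "hbset v = {Gr. (\<forall>x a y b. (x,a)\<in>Gr \<longrightarrow> (y,b)\<in>Gr \<longrightarrow> (x+y, a+b) \<in> Gr) \<and>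
     (\<forall>x a c. (x,a)\<in>Gr \<longrightarrow> (c *\<^sub>R x, c*a) \<in> Gr) \<and> (\<forall>x a. (x,a)\<in>Gr \<longrightarrow> a \<le> norm x) \<and> (v, norm v) \<in> Gr}"

lemma hbsetI:
  assumes "\<And>x a y b. (x,a)\<in>Gr \<Longrightarrow> (y,b)\<in>Gr \<Longrightarrow> (x+y, a+b) \<in> Gr"
    "\<And>x a c. (x,a)\<in>Gr \<Longrightarrow> (c *\<^sub>R x, c*a) \<in> Gr" "\<And>x a. (x,a)\<in>Gr \<Longrightarrow> a \<le> norm x"
    "(v, norm v) \<in> Gr"
  shows "Gr \<in> hbset v"
  using assms unfolding hbset_def by blast

lemma hbset_add: "Gr \<in> hbset v \<Longrightarrow> (x,a)\<in>Gr \<Longrightarrow> (y,b)\<in>Gr \<Longrightarrow> (x+y, a+b) \<in> Gr"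
  unfolding hbset_def by blast
lemma hbset_scl: "Gr \<in> hbset v \<Longrightarrow> (x,a)\<in>Gr \<Longrightarrow> (c *\<^sub>R x, c*a) \<in> Gr"
  unfolding hbset_def by blast
lemma hbset_bnd: "Gr \<in> hbset v \<Longrightarrow> (x,a)\<in>Gr \<Longrightarrow> a \<le> norm x"
  unfolding hbset_def by blast
lemma hbset_v: "Gr \<in> hbset v \<Longrightarrow> (v, norm v) \<in> Gr"
  unfolding hbset_def by blast

lemma hb_ext:
  fixes M :: "('x::real_normed_vector \<times> real) set"
  assumes M: "M \<in> hbset v" and nz: "\<forall>c. (z,c) \<notin> M"
  shows "\<exists>M'\<in>hbset v. M \<subseteq> M' \<and> M' \<noteq> M"
proof -
  have add: "(x+y, a+b) \<in> M" if "(x,a)\<in>M" "(y,b)\<in>M" for x a y b using hbset_add[OF M that] .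
  have scl: "(c *\<^sub>R x, c*a) \<in> M" if "(x,a)\<in>M" for x a c using hbset_scl[OF M that] .
  have bnd: "a \<le> norm x" if "(x,a)\<in>M" for x a using hbset_bnd[OF M that] .
  have vin: "(v, norm v) \<in> M" using hbset_v[OF M] .
  have zero: "(0,0) \<in> M" using scl[OF vin, of 0] by simp
  have key: "a - norm (x - z) \<le> norm (y + z) - b" if "(x,a)\<in>M" "(y,b)\<in>M" for x a y b
  proof -
    have "a + b \<le> norm (x + y)" using bnd[OF add[OF that]] .
    also have "x + y = (x - z) + (y + z)" by simp
    also have "norm \<dots> \<le> norm (x - z) + norm (y + z)" by (rule norm_triangle_ineq)
    finally show ?thesis by simp
  qed
  define S where "S = (\<lambda>(x,a). a - norm (x - z)) ` M"
  define c where "c = Sup S"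
  have Sne: "S \<noteq> {}" using zero by (auto simp: S_def)
  have Sbdd: "bdd_above S" unfolding S_def bdd_above_def
    using key[OF _ zero] by (auto intro!: exI[of _ "norm z"])
  have c1: "a - norm (x - z) \<le> c" if "(x,a)\<in>M" for x a
    unfolding c_def using that Sbdd by (auto intro!: cSup_upper simp: S_def)
  have c2: "c \<le> norm (y + z) - b" if "(y,b)\<in>M" for y b
    unfolding c_def using Sne key[OF _ that] by (auto intro!: cSup_least simp: S_def)
  define M' where "M' = {(x + t *\<^sub>R z, a + t * c) | x a t. (x,a) \<in> M}"
  have bnd': "a + t * c \<le> norm (x + t *\<^sub>R z)" if "(x,a)\<in>M" for x a t
  proof (cases "t = 0")
    case True then show ?thesis using bnd[OF that] by simp
  next
    case False
    show ?thesis
    proof (cases "t > 0")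
      case True
      have "c \<le> norm ((1/t) *\<^sub>R x + z) - (1/t) * a" using c2[OF scl[OF that, of "1/t"]] .
      then have "t * c \<le> t * (norm ((1/t) *\<^sub>R x + z) - (1/t) * a)" using True by (simp add: mult_left_mono)
      also have "\<dots> = t * norm ((1/t) *\<^sub>R x + z) - a" using True by (simp add: algebra_simps)
      also have "t * norm ((1/t) *\<^sub>R x + z) = norm (t *\<^sub>R ((1/t) *\<^sub>R x + z))" using True by (simp only: norm_scaleR abs_of_pos)
      also have "t *\<^sub>R ((1/t) *\<^sub>R x + z) = x + t *\<^sub>R z" using True by (simp add: algebra_simps)
      finally show ?thesis by simp
    next
      case False2: False
      define s where "s = - t"
      have s: "s > 0" using False False2 by (simp add: s_def)
      have "(1/s) * a - norm ((1/s) *\<^sub>R x - z) \<le> c" using c1[OF scl[OF that, of "1/s"]] .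
      then have "s * ((1/s) * a - norm ((1/s) *\<^sub>R x - z)) \<le> s * c" using s by (simp add: mult_left_mono)
      moreover have "s * ((1/s) * a - norm ((1/s) *\<^sub>R x - z)) = a - s * norm ((1/s) *\<^sub>R x - z)"
        using s by (simp add: algebra_simps)
      moreover have "s * norm ((1/s) *\<^sub>R x - z) = norm (s *\<^sub>R ((1/s) *\<^sub>R x - z))"
        using s by simp
      moreover have "s *\<^sub>R ((1/s) *\<^sub>R x - z) = x + t *\<^sub>R z" using s by (simp add: algebra_simps s_def)
      ultimately have "a - norm (x + t *\<^sub>R z) \<le> s * c" by simp
      then show ?thesis by (simp add: s_def)
    qed
  qed
  have "M' \<in> hbset v"
    unfolding hbset_def
  proof (intro CollectI conjI allI impI)
    fix x a y b assume "(x,a) \<in> M'" "(y,b) \<in> M'"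
    then obtain x1 a1 t1 x2 a2 t2 where h: "(x1,a1)\<in>M" "(x2,a2)\<in>M" "x = x1 + t1 *\<^sub>R z" "a = a1 + t1 * c"
      "y = x2 + t2 *\<^sub>R z" "b = a2 + t2 * c" unfolding M'_def by blast
    have "(x1+x2, a1+a2) \<in> M" using add[OF h(1,2)] .
    moreover have "(x+y, a+b) = ((x1+x2) + (t1+t2) *\<^sub>R z, (a1+a2) + (t1+t2) * c)"
      using h(3-6) by (simp add: algebra_simps)
    ultimately show "(x+y, a+b) \<in> M'" unfolding M'_def by blast
  next
    fix x a r assume "(x,a) \<in> M'"
    then obtain x1 a1 t1 where h: "(x1,a1)\<in>M" "x = x1 + t1 *\<^sub>R z" "a = a1 + t1 * c" unfolding M'_def by blast
    have "(r *\<^sub>R x1, r*a1) \<in> M" using scl[OF h(1)] .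
    moreover have "(r *\<^sub>R x, r*a) = (r *\<^sub>R x1 + (r*t1) *\<^sub>R z, r*a1 + (r*t1) * c)"
      using h(2,3) by (simp add: algebra_simps)
    ultimately show "(r *\<^sub>R x, r*a) \<in> M'" unfolding M'_def by blast
  next
    fix x a assume "(x,a) \<in> M'"
    then obtain x1 a1 t1 where h: "(x1,a1)\<in>M" "x = x1 + t1 *\<^sub>R z" "a = a1 + t1 * c" unfolding M'_def by blast
    then show "a \<le> norm x" using bnd'[OF h(1)] by simp
  next
    have "(v, norm v) = (v + 0 *\<^sub>R z, norm v + 0 * c)" by simp
    then show "(v, norm v) \<in> M'" unfolding M'_def using vin by blast
  qed
  moreover have "M \<subseteq> M'"
  proof
    fix p assume "p \<in> M"
    moreover obtain x a where "p = (x,a)" by (cases p)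
    ultimately show "p \<in> M'" unfolding M'_def
      by (intro CollectI exI[of _ x] exI[of _ a] exI[of _ 0]) simp
  qed
  moreover have "(z, c) = (0 + 1 *\<^sub>R z, 0 + 1 * c)" by simp
  then have "(z, c) \<in> M'" unfolding M'_def using zero by blast
  ultimately show ?thesis using nz by blast
qed

lemma hahn_banach_norm:
  fixes v :: "'x::real_normed_vector"
  shows "\<exists>\<phi>. linear \<phi> \<and> (\<forall>x. \<phi> x \<le> norm x) \<and> \<phi> v = norm v"
proof -
  define A where "A = hbset v"
  define G0 where "G0 = {(t *\<^sub>R v, t * norm v) | t. True}"
  have G0: "G0 \<in> A" unfolding A_def hbset_def
  proof (intro CollectI conjI allI impI)
    fix x a y b assume "(x,a) \<in> G0" "(y,b) \<in> G0"
    then obtain s t where st: "x = s *\<^sub>R v" "a = s * norm v" "y = t *\<^sub>R v" "b = t * norm v"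
      unfolding G0_def by blast
    have "(x+y, a+b) = ((s+t) *\<^sub>R v, (s+t) * norm v)" using st by (simp add: scaleR_add_left distrib_right)
    then show "(x+y, a+b) \<in> G0" unfolding G0_def by blast
  next
    fix x a c assume "(x,a) \<in> G0"
    then obtain s where st: "x = s *\<^sub>R v" "a = s * norm v" unfolding G0_def by blast
    have "(c *\<^sub>R x, c * a) = ((c * s) *\<^sub>R v, (c * s) * norm v)" using st by simp
    then show "(c *\<^sub>R x, c*a) \<in> G0" unfolding G0_def by blast
  next
    fix x a assume "(x,a) \<in> G0"
    then obtain s where st: "x = s *\<^sub>R v" "a = s * norm v" unfolding G0_def by blast
    then show "a \<le> norm x" by (simp add: mult_right_mono)
  next
    have "(v, norm v) = (1 *\<^sub>R v, 1 * norm v)" by simp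
    then show "(v, norm v) \<in> G0" unfolding G0_def by blast
  qed
  have "\<forall>C\<in>chains A. \<exists>U\<in>A. \<forall>X\<in>C. X \<subseteq> U"
  proof
    fix C assume C: "C \<in> chains A"
    have CA: "\<And>X. X \<in> C \<Longrightarrow> X \<in> hbset v" using C unfolding chains_def A_def by blast
    have ch: "X \<subseteq> Y \<or> Y \<subseteq> X" if "X \<in> C" "Y \<in> C" for X Y
      using C that unfolding chains_def chain_subset_def by blast
    show "\<exists>U\<in>A. \<forall>X\<in>C. X \<subseteq> U"
    proof (cases "C = {}")
      case True then show ?thesis using G0 by blast
    next
      case False
      have "\<Union>C \<in> hbset v"
      proof (rule hbsetI)
        fix x a y b assume "(x,a) \<in> \<Union>C" "(y,b) \<in> \<Union>C"
        then obtain X Y where XY: "X \<in> C" "Y \<in> C" "(x,a)\<in>X" "(y,b)\<in>Y" by blast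
        show "(x+y, a+b) \<in> \<Union>C"
        proof (cases "X \<subseteq> Y")
          case True
          then have "(x+y, a+b) \<in> Y" using hbset_add[OF CA[OF XY(2)]] XY by blast
          then show ?thesis using XY(2) by blast
        next
          case False
          then have "Y \<subseteq> X" using ch[OF XY(1,2)] by blast
          then have "(x+y, a+b) \<in> X" using hbset_add[OF CA[OF XY(1)]] XY by blast
          then show ?thesis using XY(1) by blast
        qed
      next
        fix x a c assume "(x,a) \<in> \<Union>C"
        then obtain X where X: "X \<in> C" "(x,a)\<in>X" by blast
        then have "(c *\<^sub>R x, c*a) \<in> X" using hbset_scl[OF CA[OF X(1)]] by blast
        then show "(c *\<^sub>R x, c*a) \<in> \<Union>C" using X(1) by blast
      next
        fix x a assume "(x,a) \<in> \<Union>C"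
        then obtain X where X: "X \<in> C" "(x,a)\<in>X" by blast
        then show "a \<le> norm x" using hbset_bnd[OF CA[OF X(1)]] by blast
      next
        obtain X where X: "X \<in> C" using False by blast
        then have "(v, norm v) \<in> X" using hbset_v[OF CA[OF X(1)]] by blast
        then show "(v, norm v) \<in> \<Union>C" using X by blast
      qed
      then show ?thesis unfolding A_def by blast
    qed
  qed
  then obtain M where M: "M \<in> A" and maxM: "\<forall>X\<in>A. M \<subseteq> X \<longrightarrow> X = M"
    using Zorn_Lemma2[of A] by blast
  have MA: "M \<in> hbset v" using M by (simp add: A_def)
  have add: "(x+y, a+b) \<in> M" if "(x,a)\<in>M" "(y,b)\<in>M" for x a y b using hbset_add[OF MA that] .
  have scl: "(c *\<^sub>R x, c*a) \<in> M" if "(x,a)\<in>M" for x a c using hbset_scl[OF MA that] .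
  have bnd: "a \<le> norm x" if "(x,a)\<in>M" for x a using hbset_bnd[OF MA that] .
  have vin: "(v, norm v) \<in> M" using hbset_v[OF MA] .
  have tot: "\<exists>c. (z,c) \<in> M" for z
    using hb_ext[of M v z] M maxM unfolding A_def by blast
  have uniq: "a = b" if "(x,a)\<in>M" "(x,b)\<in>M" for x a b
  proof -
    have "(0, a - b) \<in> M" using add[OF that(1) scl[OF that(2), of "-1"]] by simp
    then have "a - b \<le> 0" using bnd by fastforce
    moreover have "(0, b - a) \<in> M" using add[OF that(2) scl[OF that(1), of "-1"]] by simp
    then have "b - a \<le> 0" using bnd by fastforce
    ultimately show ?thesis by simp
  qed
  define \<phi> where "\<phi> x = (SOME a. (x,a) \<in> M)" for x
  have phiM: "(x, \<phi> x) \<in> M" for x unfolding \<phi>_def using tot[of x] by (rule someI_ex)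
  have "linear \<phi>"
  proof (rule linearI)
    fix x y show "\<phi> (x + y) = \<phi> x + \<phi> y" using uniq[OF phiM add[OF phiM phiM]] .
  next
    fix c x show "\<phi> (c *\<^sub>R x) = c *\<^sub>R \<phi> x" using uniq[OF phiM scl[OF phiM]] by simp
  qed
  moreover have "\<forall>x. \<phi> x \<le> norm x" using bnd[OF phiM] by blast
  moreover have "\<phi> v = norm v" using uniq[OF phiM vin] .
  ultimately show ?thesis by blast
qed

lemma norming_functional:
  fixes v :: "'x::real_normed_vector"
  shows "\<exists>\<psi> :: 'x \<Rightarrow>\<^sub>L real. norm \<psi> \<le> 1 \<and> blinfun_apply \<psi> v = norm v"
proof -
  obtain \<phi> where \<phi>: "linear \<phi>" "\<forall>x. \<phi> x \<le> norm x" "\<phi> v = norm v"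
    using hahn_banach_norm by blast
  have ab: "\<bar>\<phi> x\<bar> \<le> norm x" for x
  proof -
    have "\<phi> x \<le> norm x" "\<phi> (-x) \<le> norm (-x)" using \<phi>(2) by blast+
    moreover have "\<phi> (-x) = - \<phi> x" using linear_neg[OF \<phi>(1), of x] .
    ultimately show ?thesis by (simp add: abs_le_iff)
  qed
  have bl: "bounded_linear \<phi>"
  proof (rule bounded_linear_intro[where K=1])
    fix x y show "\<phi> (x + y) = \<phi> x + \<phi> y" using \<phi>(1) by (simp add: linear_add)
  next
    fix r x show "\<phi> (r *\<^sub>R x) = r *\<^sub>R \<phi> x" using \<phi>(1) by (simp add: linear_scale)
  next
    fix x show "norm (\<phi> x) \<le> norm x * 1" using ab[of x] by simp
  qed
  show ?thesis
    apply (rule exI[of _ "Blinfun \<phi>"])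
    using bl ab \<phi>(3) by (auto simp: bounded_linear_Blinfun_apply intro!: norm_blinfun_bound)
qed

lemma norming_functional_unit:
  fixes v :: "'x::real_normed_vector"
  assumes "v \<noteq> 0"
  shows "\<exists>\<psi> :: 'x \<Rightarrow>\<^sub>L real. norm \<psi> = 1 \<and> blinfun_apply \<psi> v = norm v"
proof -
  obtain \<psi> :: "'x \<Rightarrow>\<^sub>L real" where \<psi>: "norm \<psi> \<le> 1" "blinfun_apply \<psi> v = norm v"
    using norming_functional by blast
  have "norm v \<le> norm \<psi> * norm v" using norm_blinfun[of \<psi> v] \<psi>(2) by simp
  then have "norm \<psi> \<ge> 1" using assms by simp
  then show ?thesis using \<psi> by auto
qed


lemma sc_comb:
  fixes u1 u2 :: "'b::real_normed_vector"
  assumes sc: "strictly_convex TYPE('b)" and n: "norm u1 = 1" "norm u2 = 1" "u1 \<noteq> u2"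
    and al: "0 < \<alpha>" "\<alpha> < 1"
  shows "norm (\<alpha> *\<^sub>R u1 + (1 - \<alpha>) *\<^sub>R u2) < 1"
proof -
  have mid: "norm ((1/2) *\<^sub>R (u1 + u2)) < 1" using sc n unfolding strictly_convex_def by blast
  show ?thesis
  proof (cases "\<alpha> \<le> 1/2")
    case True
    have "\<alpha> *\<^sub>R u1 + (1 - \<alpha>) *\<^sub>R u2 = (2*\<alpha>) *\<^sub>R ((1/2) *\<^sub>R (u1 + u2)) + (1 - 2*\<alpha>) *\<^sub>R u2"
      by (simp add: algebra_simps scaleR_add_left[symmetric])
    also have "norm \<dots> \<le> (2*\<alpha>) * norm ((1/2) *\<^sub>R (u1 + u2)) + (1 - 2*\<alpha>) * norm u2"
      using True al by (intro order.trans[OF norm_triangle_ineq]) simp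
    also have "\<dots> < (2*\<alpha>) * 1 + (1 - 2*\<alpha>) * 1"
      using mid al True n by (intro add_less_le_mono mult_strict_left_mono) auto
    finally show ?thesis by simp
  next
    case False
    have mid': "norm ((1/2) *\<^sub>R (u2 + u1)) < 1" using mid by (simp add: add.commute)
    have "\<alpha> *\<^sub>R u1 + (1 - \<alpha>) *\<^sub>R u2 = (2*(1-\<alpha>)) *\<^sub>R ((1/2) *\<^sub>R (u2 + u1)) + (1 - 2*(1-\<alpha>)) *\<^sub>R u1"
      by (simp add: algebra_simps scaleR_add_left[symmetric])
    also have "norm \<dots> \<le> (2*(1-\<alpha>)) * norm ((1/2) *\<^sub>R (u2 + u1)) + (1 - 2*(1-\<alpha>)) * norm u1"
      using False al by (intro order.trans[OF norm_triangle_ineq]) simp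
    also have "\<dots> < (2*(1-\<alpha>)) * 1 + (1 - 2*(1-\<alpha>)) * 1"
      using mid' al False n by (intro add_less_le_mono mult_strict_left_mono) auto
    finally show ?thesis by simp
  qed
qed

lemma blinfun_norm_le_unit:
  fixes \<phi> :: "'x::real_normed_vector \<Rightarrow>\<^sub>L real"
  assumes h: "\<And>x. norm x \<le> 1 \<Longrightarrow> blinfun_apply \<phi> x \<le> K"
  shows "norm \<phi> \<le> K"
proof -
  have K0: "0 \<le> K" using h[of 0] by simp
  have "norm (blinfun_apply \<phi> x) \<le> K * norm x" for x
  proof (cases "x = 0")
    case True then show ?thesis by simp
  next
    case False
    define u where "u = (1 / norm x) *\<^sub>R x"
    have nu: "norm u \<le> 1" "norm (-u) \<le> 1" using False by (auto simp: u_def)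
    have "blinfun_apply \<phi> u \<le> K" "blinfun_apply \<phi> (-u) \<le> K" using h nu by auto
    then have a: "\<bar>blinfun_apply \<phi> u\<bar> \<le> K" by (simp add: blinfun.minus_right abs_le_iff)
    have "x = norm x *\<^sub>R u" using False by (simp add: u_def)
    then have "blinfun_apply \<phi> x = norm x * blinfun_apply \<phi> u" by (metis blinfun.scaleR_right real_scaleR_def)
    then have "\<bar>blinfun_apply \<phi> x\<bar> = norm x * \<bar>blinfun_apply \<phi> u\<bar>" by (simp add: abs_mult)
    also have "\<dots> \<le> norm x * K" using a by (simp add: mult_left_mono)
    finally show ?thesis by (simp add: mult.commute)
  qed
  then show ?thesis using K0 by (intro norm_blinfun_bound) auto
qed

lemma sc_split:
  fixes \<phi>1 \<phi>2 \<psi> :: "'x::real_normed_vector \<Rightarrow>\<^sub>L real"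
  assumes sc: "strictly_convex TYPE('x \<Rightarrow>\<^sub>L real)" and n\<psi>: "norm \<psi> = 1"
    and sum: "\<And>x. blinfun_apply \<phi>1 x + blinfun_apply \<phi>2 x = blinfun_apply \<psi> x"
    and bd: "\<And>x y. norm x \<le> 1 \<Longrightarrow> norm y \<le> 1 \<Longrightarrow> blinfun_apply \<phi>1 x + blinfun_apply \<phi>2 y \<le> 1"
  shows "\<phi>1 = norm \<phi>1 *\<^sub>R \<psi> \<and> norm \<phi>1 \<le> 1"
proof -
  define \<alpha> where "\<alpha> = norm \<phi>1"
  define \<beta> where "\<beta> = norm \<phi>2"
  have h1: "norm \<phi>1 \<le> 1 - blinfun_apply \<phi>2 y" if "norm y \<le> 1" for y
    using bd that by (intro blinfun_norm_le_unit) (simp add: algebra_simps)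
  have "blinfun_apply \<phi>2 y \<le> 1 - \<alpha>" if "norm y \<le> 1" for y using h1[OF that] unfolding \<alpha>_def by linarith
  then have ab: "\<beta> \<le> 1 - \<alpha>" unfolding \<beta>_def by (intro blinfun_norm_le_unit)
  have psi: "\<psi> = \<phi>1 + \<phi>2" using sum by (intro blinfun_eqI) (simp add: blinfun.add_left)
  have "1 \<le> \<alpha> + \<beta>" using n\<psi> psi norm_triangle_ineq[of \<phi>1 \<phi>2] by (simp add: \<alpha>_def \<beta>_def)
  then have ab1: "\<alpha> + \<beta> = 1" using ab by simp
  have a0: "0 \<le> \<alpha>" "0 \<le> \<beta>" by (auto simp: \<alpha>_def \<beta>_def)
  show ?thesis
  proof (cases "\<alpha> = 0")
    case True then show ?thesis by (simp add: \<alpha>_def)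
  next
    case an: False
    show ?thesis
    proof (cases "\<beta> = 0")
      case True
      then have "\<phi>2 = 0" by (simp add: \<beta>_def)
      then show ?thesis using psi ab1 True by (simp add: \<alpha>_def)
    next
      case bn: False
      define u1 where "u1 = (1/\<alpha>) *\<^sub>R \<phi>1"
      define u2 where "u2 = (1/\<beta>) *\<^sub>R \<phi>2"
      have nu: "norm u1 = 1" "norm u2 = 1" using an bn a0 by (auto simp: u1_def u2_def \<alpha>_def \<beta>_def)
      have e1: "\<phi>1 = \<alpha> *\<^sub>R u1" "\<phi>2 = \<beta> *\<^sub>R u2" using an bn by (auto simp: u1_def u2_def)
      have b1: "\<beta> = 1 - \<alpha>" using ab1 by simp
      have "\<psi> = \<alpha> *\<^sub>R u1 + \<beta> *\<^sub>R u2" using psi e1 by simp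
      then have ps: "\<psi> = \<alpha> *\<^sub>R u1 + (1 - \<alpha>) *\<^sub>R u2" unfolding b1 .
      have "u1 = u2"
      proof (rule ccontr)
        assume "u1 \<noteq> u2"
        then have "norm \<psi> < 1" unfolding ps using sc_comb[OF sc nu] an bn a0 ab1 by simp
        then show False using n\<psi> by simp
      qed
      then have "\<psi> = (\<alpha> + (1 - \<alpha>)) *\<^sub>R u1" using ps by (simp only: scaleR_add_left)
      then have "\<psi> = u1" by simp
      then show ?thesis using e1 ab1 a0 nu by (simp add: \<alpha>_def[symmetric])
    qed
  qed
qed


definition ufun :: "('g::topological_space \<Rightarrow> real) \<Rightarrow> bool" where
  "ufun a \<longleftrightarrow> continuous_on UNIV a \<and> (\<forall>t. 0 \<le> a t \<and> a t \<le> 1)"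

definition tens :: "('g::topological_space \<Rightarrow> real) \<Rightarrow> 'x::real_normed_vector \<Rightarrow> ('g \<Rightarrow>\<^sub>C 'x)" where
  "tens a x = Bcontfun (\<lambda>t. a t *\<^sub>R x)"

definition mulf :: "('g::topological_space \<Rightarrow> real) \<Rightarrow> ('g \<Rightarrow>\<^sub>C 'x::real_normed_vector) \<Rightarrow> ('g \<Rightarrow>\<^sub>C 'x)" where
  "mulf a f = Bcontfun (\<lambda>t. a t *\<^sub>R apply_bcontfun f t)"

lemma lt_apply:
  fixes f :: "'g::topological_group_add \<Rightarrow>\<^sub>C 'x::real_normed_vector"
  shows "apply_bcontfun (left_transl g f) s = apply_bcontfun f (g + s)"
proof -
  have "continuous_on UNIV (\<lambda>s. apply_bcontfun f (g + s))"
    by (intro continuous_on_compose2[OF continuous_on_apply_bcontfun] continuous_intros) auto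
  then have "(\<lambda>s. apply_bcontfun f (g + s)) \<in> bcontfun"
    by (rule bcontfun_normI) (rule norm_bounded)
  then show ?thesis by (simp add: left_transl_def Bcontfun_inverse)
qed

lemma blinfun_le: "blinfun_apply (psi :: 'x::real_normed_vector \<Rightarrow>\<^sub>L real) z \<le> norm psi * norm z"
proof -
  have "norm (blinfun_apply psi z) \<le> norm psi * norm z" by (rule norm_blinfun)
  then show ?thesis by (simp add: abs_le_iff)
qed

lemma ufunD: "ufun a \<Longrightarrow> continuous_on UNIV a" "ufun a \<Longrightarrow> 0 \<le> a t" "ufun a \<Longrightarrow> a t \<le> 1"
  by (auto simp: ufun_def)

lemma blinfun_nz:
  fixes ch :: "'x::real_normed_vector \<Rightarrow>\<^sub>L real"
  assumes "ch \<noteq> 0" obtains x where "blinfun_apply ch x \<noteq> 0"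
proof -
  have "\<not> (\<forall>x. blinfun_apply ch x = 0)"
  proof
    assume "\<forall>x. blinfun_apply ch x = 0"
    then have "ch = 0" by (intro blinfun_eqI) simp
    then show False using assms by simp
  qed
  then show ?thesis using that by blast
qed

lemma mu_indep:
  fixes ch1 ch2 :: "'x::real_normed_vector \<Rightarrow>\<^sub>L real"
  assumes H: "\<And>ch::'x \<Rightarrow>\<^sub>L real. ch \<noteq> 0 \<Longrightarrow> \<exists>\<mu>. \<forall>x. blinfun_apply ch (W x) = \<mu> * blinfun_apply ch x"
    and n: "ch1 \<noteq> 0" "ch2 \<noteq> 0"
    and h1: "\<And>x. blinfun_apply ch1 (W x) = \<mu>1 * blinfun_apply ch1 x"
    and h2: "\<And>x. blinfun_apply ch2 (W x) = \<mu>2 * blinfun_apply ch2 x"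
  shows "\<mu>1 = \<mu>2"
proof (cases "ch1 + ch2 = 0")
  case True
  then have e: "blinfun_apply ch2 x = - blinfun_apply ch1 x" for x
    by (metis add.commute add.inverse_unique blinfun.minus_left)
  obtain x where x: "blinfun_apply ch2 x \<noteq> 0" using n(2) by (rule blinfun_nz)
  have "blinfun_apply ch2 (W x) = \<mu>1 * blinfun_apply ch2 x"
    using h1[of x] e[of x] e[of "W x"] by simp
  then show ?thesis using h2[of x] x by simp
next
  case False
  obtain \<mu>3 where h3: "\<And>x. blinfun_apply (ch1 + ch2) (W x) = \<mu>3 * blinfun_apply (ch1 + ch2) x"
    using H[OF False] by blast
  have eq: "(\<mu>1 - \<mu>3) * blinfun_apply ch1 x = (\<mu>3 - \<mu>2) * blinfun_apply ch2 x" for x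
  proof -
    have "\<mu>1 * blinfun_apply ch1 x + \<mu>2 * blinfun_apply ch2 x = \<mu>3 * (blinfun_apply ch1 x + blinfun_apply ch2 x)"
      using h3[of x] h1[of x] h2[of x] by (simp only: blinfun.add_left)
    then show ?thesis by (simp only: left_diff_distrib distrib_left)
  qed
  obtain x1 where x1: "blinfun_apply ch1 x1 \<noteq> 0" using n(1) by (rule blinfun_nz)
  obtain x2 where x2: "blinfun_apply ch2 x2 \<noteq> 0" using n(2) by (rule blinfun_nz)
  have E1: "(\<mu>1 - \<mu>3) * (\<mu>1 * blinfun_apply ch1 x) = (\<mu>3 - \<mu>2) * (\<mu>2 * blinfun_apply ch2 x)" for x
    using eq[of "W x"] h1[of x] h2[of x] by simp
  have "(\<mu>1 - \<mu>3) * (\<mu>1 - \<mu>2) * blinfun_apply ch1 x1 = 0"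
  proof -
    have "\<mu>2 * ((\<mu>1 - \<mu>3) * blinfun_apply ch1 x1) = \<mu>2 * ((\<mu>3 - \<mu>2) * blinfun_apply ch2 x1)"
      using eq[of x1] by simp
    then show ?thesis using E1[of x1] by (simp add: algebra_simps)
  qed
  then have A: "(\<mu>1 - \<mu>3) * (\<mu>1 - \<mu>2) = 0" using x1 by simp
  have "(\<mu>3 - \<mu>2) * (\<mu>2 - \<mu>1) * blinfun_apply ch2 x2 = 0"
  proof -
    have "\<mu>1 * ((\<mu>1 - \<mu>3) * blinfun_apply ch1 x2) = \<mu>1 * ((\<mu>3 - \<mu>2) * blinfun_apply ch2 x2)"
      using eq[of x2] by simp
    then show ?thesis using E1[of x2] by (simp add: algebra_simps)
  qed
  then have B: "(\<mu>3 - \<mu>2) * (\<mu>2 - \<mu>1) = 0" using x2 by simp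
  show ?thesis using A B by auto
qed

locale phictx =
  fixes Phi :: "('g::{topological_group_add,t2_space} \<Rightarrow>\<^sub>C 'x::real_normed_vector) \<Rightarrow> 'x"
  assumes cpt: "compact (UNIV :: 'g set)"
    and lin: "linear Phi"
    and nb: "\<And>f. norm (Phi f) \<le> norm f"
    and cst: "\<And>x. Phi (const_bcontfun x) = x"
    and iso: "\<And>f. \<exists>s. norm (Phi (left_transl s f)) = norm f"
    and sc: "strictly_convex TYPE('x \<Rightarrow>\<^sub>L real)"
    and ntriv: "\<exists>e::'x. e \<noteq> 0"
begin

lemma tens_apply:
  assumes "continuous_on UNIV a"
  shows "apply_bcontfun (tens a x :: 'g \<Rightarrow>\<^sub>C 'x) t = a t *\<^sub>R x"
proof -
  have "continuous_on UNIV (\<lambda>t. a t *\<^sub>R x)" using assms by (intro continuous_intros)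
  then have "(\<lambda>t. a t *\<^sub>R x) \<in> bcontfun" by (rule cont_bcontfun[OF cpt])
  then show ?thesis by (simp add: tens_def Bcontfun_inverse)
qed

lemma mulf_apply:
  assumes "continuous_on UNIV a"
  shows "apply_bcontfun (mulf a f :: 'g \<Rightarrow>\<^sub>C 'x) t = a t *\<^sub>R apply_bcontfun f t"
proof -
  have "continuous_on UNIV (\<lambda>t. a t *\<^sub>R apply_bcontfun f t)" using assms by (intro continuous_intros) auto
  then have "(\<lambda>t. a t *\<^sub>R apply_bcontfun f t) \<in> bcontfun" by (rule cont_bcontfun[OF cpt])
  then show ?thesis by (simp add: mulf_def Bcontfun_inverse)
qed

lemma Phi_add: "Phi (f + g) = Phi f + Phi g" using lin by (rule linear_add)
lemma Phi_scale: "Phi (c *\<^sub>R f) = c *\<^sub>R Phi f" using lin by (rule linear_scale)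
lemma Phi_diff: "Phi (f - g) = Phi f - Phi g" using lin by (rule linear_diff)
lemma Phi_zero: "Phi 0 = 0" using lin by (rule linear_0)

lemma tens_norm:
  assumes "continuous_on UNIV a" "\<And>t. \<bar>a t\<bar> \<le> 1"
  shows "norm (tens a x :: 'g \<Rightarrow>\<^sub>C 'x) \<le> norm x"
proof (rule norm_bound)
  fix t
  have "norm (a t *\<^sub>R x) \<le> norm x" using assms(2)[of t] by (simp add: mult_left_le_one_le)
  then show "norm (apply_bcontfun (tens a x :: 'g \<Rightarrow>\<^sub>C 'x) t) \<le> norm x" using tens_apply[OF assms(1)] by simp
qed

lemma tens_lin:
  assumes "continuous_on UNIV a"
  shows "linear (\<lambda>x. Phi (tens a x :: 'g \<Rightarrow>\<^sub>C 'x))"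
proof (rule linearI)
  fix x y
  have "(tens a (x + y) :: 'g \<Rightarrow>\<^sub>C 'x) = tens a x + tens a y"
    by (rule bcontfun_eqI) (simp add: tens_apply[OF assms] scaleR_add_right)
  then show "Phi (tens a (x + y)) = Phi (tens a x) + Phi (tens a y)" by (simp add: Phi_add)
next
  fix c x
  have "(tens a (c *\<^sub>R x) :: 'g \<Rightarrow>\<^sub>C 'x) = c *\<^sub>R tens a x"
    by (rule bcontfun_eqI) (simp add: tens_apply[OF assms])
  then show "Phi (tens a (c *\<^sub>R x)) = c *\<^sub>R Phi (tens a x)" by (simp add: Phi_scale)
qed

lemma tens_bl:
  fixes psi :: "'x \<Rightarrow>\<^sub>L real"
  assumes "continuous_on UNIV a" "\<And>t. \<bar>a t\<bar> \<le> 1"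
  shows "bounded_linear (\<lambda>x. blinfun_apply psi (Phi (tens a x :: 'g \<Rightarrow>\<^sub>C 'x)))"
proof -
  have l: "linear (\<lambda>x. blinfun_apply psi (Phi (tens a x :: 'g \<Rightarrow>\<^sub>C 'x)))"
    using linear_compose[OF tens_lin[OF assms(1)] bounded_linear.linear[OF blinfun.bounded_linear_right]]
    by (simp add: o_def)
  show ?thesis
  proof (rule bounded_linear_intro[where K="norm psi"])
    fix x y show "blinfun_apply psi (Phi (tens a (x + y))) = blinfun_apply psi (Phi (tens a x)) + blinfun_apply psi (Phi (tens a y))"
      using l by (rule linear_add)
  next
    fix r x show "blinfun_apply psi (Phi (tens a (r *\<^sub>R x))) = r *\<^sub>R blinfun_apply psi (Phi (tens a x))"
      using l by (rule linear_scale)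
  next
    fix x
    have "norm (blinfun_apply psi (Phi (tens a x :: 'g \<Rightarrow>\<^sub>C 'x))) \<le> norm psi * norm (Phi (tens a x :: 'g \<Rightarrow>\<^sub>C 'x))"
      by (rule norm_blinfun)
    also have "\<dots> \<le> norm psi * norm x"
      using nb[of "tens a x"] tens_norm[OF assms, of x] by (intro mult_left_mono) auto
    finally show "norm (blinfun_apply psi (Phi (tens a x :: 'g \<Rightarrow>\<^sub>C 'x))) \<le> norm x * norm psi"
      by (simp add: mult.commute)
  qed
qed

lemma tens_one: "(tens (\<lambda>_. c) x :: 'g \<Rightarrow>\<^sub>C 'x) = c *\<^sub>R const_bcontfun x"
  by (rule bcontfun_eqI) (simp add: tens_apply)

lemma step4:
  fixes psi :: "'x \<Rightarrow>\<^sub>L real"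
  assumes np: "norm psi = 1" and a: "ufun (a :: 'g \<Rightarrow> real)"
  shows "\<exists>\<mu>. 0 \<le> \<mu> \<and> \<mu> \<le> 1 \<and> (\<forall>x. blinfun_apply psi (Phi (tens a x :: 'g \<Rightarrow>\<^sub>C 'x)) = \<mu> * blinfun_apply psi x)"
proof -
  define b where "b = (\<lambda>t. 1 - a t)"
  have ca: "continuous_on UNIV a" using a by (simp add: ufun_def)
  have cb: "continuous_on UNIV b" unfolding b_def using ca by (intro continuous_intros)
  have aa: "\<bar>a t\<bar> \<le> 1" and ab: "\<bar>b t\<bar> \<le> 1" for t using a by (auto simp: ufun_def b_def)
  define p1 where "p1 = Blinfun (\<lambda>x. blinfun_apply psi (Phi (tens a x :: 'g \<Rightarrow>\<^sub>C 'x)))"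
  define p2 where "p2 = Blinfun (\<lambda>x. blinfun_apply psi (Phi (tens b x :: 'g \<Rightarrow>\<^sub>C 'x)))"
  have p1: "blinfun_apply p1 x = blinfun_apply psi (Phi (tens a x :: 'g \<Rightarrow>\<^sub>C 'x))" for x
    unfolding p1_def using tens_bl[OF ca aa] by (simp add: bounded_linear_Blinfun_apply)
  have p2: "blinfun_apply p2 x = blinfun_apply psi (Phi (tens b x :: 'g \<Rightarrow>\<^sub>C 'x))" for x
    unfolding p2_def using tens_bl[OF cb ab] by (simp add: bounded_linear_Blinfun_apply)
  have sum: "blinfun_apply p1 x + blinfun_apply p2 x = blinfun_apply psi x" for x
  proof -
    have "(tens a x :: 'g \<Rightarrow>\<^sub>C 'x) + tens b x = const_bcontfun x"
      by (rule bcontfun_eqI) (simp add: tens_apply[OF ca] tens_apply[OF cb], simp add: b_def scaleR_diff_left)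
    then have "Phi (tens a x :: 'g \<Rightarrow>\<^sub>C 'x) + Phi (tens b x) = x" by (metis Phi_add cst)
    then show ?thesis by (simp add: p1 p2 flip: blinfun.add_right)
  qed
  have bd: "blinfun_apply p1 x + blinfun_apply p2 y \<le> 1" if "norm x \<le> 1" "norm y \<le> 1" for x y
  proof -
    have nF: "norm ((tens a x :: 'g \<Rightarrow>\<^sub>C 'x) + tens b y) \<le> 1"
    proof (rule norm_bound)
      fix t
      have at: "0 \<le> a t" "a t \<le> 1" using a by (simp_all add: ufun_def)
      then have bt: "0 \<le> b t" by (simp add: b_def)
      have "norm (a t *\<^sub>R x + b t *\<^sub>R y) \<le> norm (a t *\<^sub>R x) + norm (b t *\<^sub>R y)" by (rule norm_triangle_ineq)
      also have "\<dots> = a t * norm x + b t * norm y" using at bt by simp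
      also have "\<dots> \<le> a t * 1 + b t * 1"
        using that at bt by (intro add_mono mult_left_mono) simp_all
      also have "\<dots> = 1" by (simp add: b_def)
      finally show "norm (apply_bcontfun ((tens a x :: 'g \<Rightarrow>\<^sub>C 'x) + tens b y) t) \<le> 1"
        by (simp add: tens_apply[OF ca] tens_apply[OF cb])
    qed
    have "blinfun_apply p1 x + blinfun_apply p2 y = blinfun_apply psi (Phi ((tens a x :: 'g \<Rightarrow>\<^sub>C 'x) + tens b y))"
      by (simp add: p1 p2 Phi_add blinfun.add_right)
    also have "\<dots> \<le> norm psi * norm (Phi ((tens a x :: 'g \<Rightarrow>\<^sub>C 'x) + tens b y))"
      by (rule blinfun_le)
    also have "\<dots> \<le> 1" using np nb[of "(tens a x :: 'g \<Rightarrow>\<^sub>C 'x) + tens b y"] nF by simp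
    finally show ?thesis .
  qed
  have "p1 = norm p1 *\<^sub>R psi \<and> norm p1 \<le> 1" by (rule sc_split[OF sc np sum bd])
  then have e: "p1 = norm p1 *\<^sub>R psi" and le: "norm p1 \<le> 1" by auto
  have "blinfun_apply p1 x = norm p1 * blinfun_apply psi x" for x
    using arg_cong[OF e, of "\<lambda>f. blinfun_apply f x"] by (simp add: scaleR_blinfun.rep_eq)
  then show ?thesis using le by (intro exI[of _ "norm p1"]) (simp add: p1)
qed

end

context phictx begin

lemma M1:
  assumes a: "ufun (a :: 'g \<Rightarrow> real)"
  shows "\<exists>\<mu>. 0 \<le> \<mu> \<and> \<mu> \<le> 1 \<and> (\<forall>x. Phi (tens a x :: 'g \<Rightarrow>\<^sub>C 'x) = \<mu> *\<^sub>R x)"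
proof -
  define W where "W = (\<lambda>x. Phi (tens a x :: 'g \<Rightarrow>\<^sub>C 'x))"
  have ca: "continuous_on UNIV a" using a by (simp add: ufun_def)
  have H: "\<exists>\<mu>. \<forall>x. blinfun_apply ch (W x) = \<mu> * blinfun_apply ch x" if "ch \<noteq> 0" for ch :: "'x \<Rightarrow>\<^sub>L real"
  proof -
    define u where "u = (1 / norm ch) *\<^sub>R ch"
    have "norm u = 1" using that by (simp add: u_def)
    then obtain \<mu> where mu: "\<forall>x. blinfun_apply u (W x) = \<mu> * blinfun_apply u x"
      using step4[OF _ a] unfolding W_def by blast
    have "blinfun_apply ch (W x) = \<mu> * blinfun_apply ch x" for x
    proof -
      have "(1 / norm ch) * blinfun_apply ch (W x) = (1 / norm ch) * (\<mu> * blinfun_apply ch x)"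
        using mu[rule_format, of x] by (simp add: u_def scaleR_blinfun.rep_eq)
      then show ?thesis using that by simp
    qed
    then show ?thesis by blast
  qed
  obtain e :: 'x where e: "e \<noteq> 0" using ntriv by blast
  obtain ch0 :: "'x \<Rightarrow>\<^sub>L real" where ch0: "norm ch0 = 1" "blinfun_apply ch0 e = norm e"
    using norming_functional_unit[OF e] by blast
  obtain \<mu>0 where mu0: "0 \<le> \<mu>0" "\<mu>0 \<le> 1" "\<forall>x. blinfun_apply ch0 (W x) = \<mu>0 * blinfun_apply ch0 x"
    using step4[OF ch0(1) a] unfolding W_def by blast
  have ch0nz: "ch0 \<noteq> 0" using ch0(1) by auto
  have "W x = \<mu>0 *\<^sub>R x" for x
  proof (rule ccontr)
    assume ne: "W x \<noteq> \<mu>0 *\<^sub>R x"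
    define r where "r = W x - \<mu>0 *\<^sub>R x"
    have rnz: "r \<noteq> 0" using ne by (simp add: r_def)
    then obtain ch :: "'x \<Rightarrow>\<^sub>L real" where ch: "norm ch = 1" "blinfun_apply ch r = norm r"
      using norming_functional_unit by blast
    have chnz: "ch \<noteq> 0" using ch(1) by auto
    obtain \<mu> where mu: "\<forall>x. blinfun_apply ch (W x) = \<mu> * blinfun_apply ch x" using H[OF chnz] by blast
    have "\<mu>0 = \<mu>" using mu_indep[of W ch0 ch \<mu>0 \<mu>] H ch0nz chnz mu0(3) mu by blast
    then have "blinfun_apply ch r = 0" using mu by (simp add: r_def blinfun.diff_right blinfun.scaleR_right)
    then show False using ch(2) rnz by simp
  qed
  then show ?thesis using mu0 unfolding W_def by blast
qed

definition m :: "('g \<Rightarrow> real) \<Rightarrow> real" where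
  "m a = (SOME \<mu>. 0 \<le> \<mu> \<and> \<mu> \<le> 1 \<and> (\<forall>x. Phi (tens a x :: 'g \<Rightarrow>\<^sub>C 'x) = \<mu> *\<^sub>R x))"

lemma m_prop:
  assumes "ufun a"
  shows "0 \<le> m a" "m a \<le> 1" "Phi (tens a x :: 'g \<Rightarrow>\<^sub>C 'x) = m a *\<^sub>R x"
  using someI_ex[OF M1[OF assms]] unfolding m_def[symmetric] by auto

lemma m_eq:
  assumes "ufun a" "\<And>x. Phi (tens a x :: 'g \<Rightarrow>\<^sub>C 'x) = \<mu> *\<^sub>R x"
  shows "m a = \<mu>"
proof -
  obtain e :: 'x where e: "e \<noteq> 0" using ntriv by blast
  have 1: "Phi (tens a e :: 'g \<Rightarrow>\<^sub>C 'x) = m a *\<^sub>R e" by (rule m_prop(3)[OF assms(1)])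
  have 2: "Phi (tens a e :: 'g \<Rightarrow>\<^sub>C 'x) = \<mu> *\<^sub>R e" by (rule assms(2))
  have 3: "m a *\<^sub>R e = \<mu> *\<^sub>R e" using 1 2 by (rule trans[OF sym])
  show ?thesis using 3 e scaleR_cancel_right by blast
qed

lemma ufun_const: "0 \<le> c \<Longrightarrow> c \<le> 1 \<Longrightarrow> ufun (\<lambda>_. c)"
  by (simp add: ufun_def)

lemma m_const:
  assumes "0 \<le> c" "c \<le> 1" shows "m (\<lambda>_. c) = c"
  by (rule m_eq[OF ufun_const[OF assms]]) (simp add: tens_one Phi_scale cst)

lemma tens_add:
  assumes "continuous_on UNIV a" "continuous_on UNIV b"
  shows "(tens (\<lambda>t. a t + b t) x :: 'g \<Rightarrow>\<^sub>C 'x) = tens a x + tens b x"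
proof -
  have "continuous_on UNIV (\<lambda>t. a t + b t)" using assms by (intro continuous_intros)
  then show ?thesis
    by (intro bcontfun_eqI) (simp add: tens_apply assms scaleR_add_left)
qed

lemma m_add:
  assumes "ufun a" "ufun b" "ufun (\<lambda>t. a t + b t)"
  shows "m (\<lambda>t. a t + b t) = m a + m b"
proof (rule m_eq[OF assms(3)])
  fix x
  have "(tens (\<lambda>t. a t + b t) x :: 'g \<Rightarrow>\<^sub>C 'x) = tens a x + tens b x"
    using assms by (intro tens_add) (simp_all add: ufun_def)
  then show "Phi (tens (\<lambda>t. a t + b t) x :: 'g \<Rightarrow>\<^sub>C 'x) = (m a + m b) *\<^sub>R x"
    by (simp add: Phi_add m_prop assms scaleR_add_left)
qed

lemma m_mono:
  assumes "ufun a" "ufun b" "\<And>t. a t \<le> b t"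
  shows "m a \<le> m b"
proof -
  define c where "c = (\<lambda>t. b t - a t)"
  have uc: "ufun c" using assms unfolding ufun_def c_def
    by (auto intro!: continuous_on_diff) (smt (verit))
  have eq: "(\<lambda>t. a t + c t) = b" by (simp add: c_def)
  have "m (\<lambda>t. a t + c t) = m a + m c" using m_add[OF assms(1) uc] eq assms(2) by simp
  then show ?thesis using eq m_prop(1)[OF uc] by simp
qed

lemma ufun_compl: "ufun a \<Longrightarrow> ufun (\<lambda>t. 1 - a t)"
  unfolding ufun_def by (auto intro!: continuous_intros)

lemma m_compl:
  assumes "ufun a" shows "m (\<lambda>t. 1 - a t) = 1 - m a"
proof -
  have "m (\<lambda>t. a t + (1 - a t)) = m a + m (\<lambda>t. 1 - a t)"
    using m_add[OF assms ufun_compl[OF assms]] by (simp add: ufun_const)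
  then show ?thesis using m_const[of 1] by simp
qed

lemma mulf_zero: "continuous_on UNIV a \<Longrightarrow> (mulf a 0 :: 'g \<Rightarrow>\<^sub>C 'x) = 0"
  by (rule bcontfun_eqI) (simp add: mulf_apply)

lemma M3:
  assumes a: "ufun a"
  shows "norm (Phi (mulf a f :: 'g \<Rightarrow>\<^sub>C 'x)) \<le> m a * norm f"
proof -
  have ca: "continuous_on UNIV a" using a by (simp add: ufun_def)
  define b where "b = (\<lambda>t. 1 - a t)"
  have ub: "ufun b" unfolding b_def by (rule ufun_compl[OF a])
  have cb: "continuous_on UNIV b" using ub by (simp add: ufun_def)
  have key: "norm (Phi (mulf a g :: 'g \<Rightarrow>\<^sub>C 'x)) \<le> m a" if g: "norm g \<le> 1" for g
  proof (cases "Phi (mulf a g :: 'g \<Rightarrow>\<^sub>C 'x) = 0")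
    case True then show ?thesis using m_prop(1)[OF a] by simp
  next
    case False
    define w where "w = Phi (mulf a g :: 'g \<Rightarrow>\<^sub>C 'x)"
    have wnz: "w \<noteq> 0" using False by (simp add: w_def)
    define v where "v = (1 / norm w) *\<^sub>R w"
    have nv: "norm v = 1" using wnz by (simp add: v_def)
    have wv: "w = norm w *\<^sub>R v" using wnz by (simp add: v_def)
    obtain ch :: "'x \<Rightarrow>\<^sub>L real" where ch: "norm ch \<le> 1" "blinfun_apply ch v = norm v"
      using norming_functional by blast
    define F where "F = (mulf a g :: 'g \<Rightarrow>\<^sub>C 'x) + tens b v"
    have nF: "norm F \<le> 1"
    proof (rule norm_bound)
      fix t
      have at: "0 \<le> a t" "a t \<le> 1" using a by (simp_all add: ufun_def)
      then have bt: "0 \<le> b t" by (simp add: b_def)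
      have gt: "norm (apply_bcontfun g t) \<le> 1" using norm_bounded[of g t] g by simp
      have "norm (a t *\<^sub>R apply_bcontfun g t + b t *\<^sub>R v) \<le> norm (a t *\<^sub>R apply_bcontfun g t) + norm (b t *\<^sub>R v)"
        by (rule norm_triangle_ineq)
      also have "\<dots> = a t * norm (apply_bcontfun g t) + b t * norm v" using at bt by simp
      also have "\<dots> \<le> a t * 1 + b t * 1"
        using gt nv at bt by (intro add_mono mult_left_mono) simp_all
      also have "\<dots> = 1" by (simp add: b_def)
      finally show "norm (apply_bcontfun F t) \<le> 1"
        by (simp add: F_def mulf_apply[OF ca] tens_apply[OF cb])
    qed
    have PF: "Phi F = w + (1 - m a) *\<^sub>R v"
      using m_prop(3)[OF ub, of v] m_compl[OF a] by (simp add: F_def Phi_add w_def b_def)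
    have "blinfun_apply ch (Phi F) \<le> norm ch * norm (Phi F)" by (rule blinfun_le)
    also have "\<dots> \<le> 1 * 1" using ch(1) nb[of F] nF by (intro mult_mono) auto
    finally have le1: "blinfun_apply ch (Phi F) \<le> 1" by simp
    have "blinfun_apply ch (Phi F) = norm w * blinfun_apply ch v + (1 - m a) * blinfun_apply ch v"
      unfolding PF by (subst wv) (simp add: blinfun.add_right blinfun.scaleR_right)
    then have "blinfun_apply ch (Phi F) = norm w + (1 - m a)" using ch(2) nv by simp
    then show ?thesis using le1 by (simp add: w_def)
  qed
  show ?thesis
  proof (cases "f = 0")
    case True then show ?thesis by (simp add: mulf_zero[OF ca] Phi_zero)
  next
    case False
    define g where "g = (1 / norm f) *\<^sub>R f"
    have ng: "norm g \<le> 1" using False by (simp add: g_def)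
    have "(mulf a f :: 'g \<Rightarrow>\<^sub>C 'x) = norm f *\<^sub>R mulf a g"
      using False by (intro bcontfun_eqI) (simp add: mulf_apply[OF ca] g_def)
    then have "norm (Phi (mulf a f :: 'g \<Rightarrow>\<^sub>C 'x)) = norm f * norm (Phi (mulf a g :: 'g \<Rightarrow>\<^sub>C 'x))"
      by (simp add: Phi_scale)
    also have "\<dots> \<le> norm f * m a" using key[OF ng] by (simp add: mult_left_mono)
    finally show ?thesis by (simp add: mult.commute)
  qed
qed

lemma cont_shift: "continuous_on UNIV a \<Longrightarrow> continuous_on UNIV (\<lambda>t. a (s + t :: 'g))"
  by (rule continuous_on_compose2[where t=UNIV]) (auto intro!: continuous_intros)

lemma ufun_shift: "ufun a \<Longrightarrow> ufun (\<lambda>t. a (s + t :: 'g))"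
  unfolding ufun_def using cont_shift by blast

lemma lt_tens:
  assumes "continuous_on UNIV a"
  shows "left_transl s (tens a x :: 'g \<Rightarrow>\<^sub>C 'x) = tens (\<lambda>t. a (s + t)) x"
  by (rule bcontfun_eqI) (simp add: lt_apply tens_apply assms cont_shift)

lemma ISO:
  assumes a: "ufun a" and t0: "a t0 = 1"
  shows "\<exists>s. m (\<lambda>t. a (s + t :: 'g)) = 1"
proof -
  have ca: "continuous_on UNIV a" using a by (simp add: ufun_def)
  obtain e :: 'x where e: "e \<noteq> 0" using ntriv by blast
  define e' where "e' = (1 / norm e) *\<^sub>R e"
  have ne: "norm e' = 1" using e by (simp add: e'_def)
  have ab: "\<bar>a t\<bar> \<le> 1" for t using a by (simp add: ufun_def)
  have "norm (tens a e' :: 'g \<Rightarrow>\<^sub>C 'x) \<le> 1"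
    using tens_norm[OF ca ab, of e'] ne by simp
  moreover have "1 \<le> norm (tens a e' :: 'g \<Rightarrow>\<^sub>C 'x)"
    using norm_bounded[of "tens a e' :: 'g \<Rightarrow>\<^sub>C 'x" t0] by (simp add: tens_apply[OF ca] t0 ne)
  ultimately have n1: "norm (tens a e' :: 'g \<Rightarrow>\<^sub>C 'x) = 1" by simp
  obtain s where s: "norm (Phi (left_transl s (tens a e' :: 'g \<Rightarrow>\<^sub>C 'x))) = 1"
    using iso[of "tens a e'"] n1 by auto
  have "Phi (left_transl s (tens a e' :: 'g \<Rightarrow>\<^sub>C 'x)) = m (\<lambda>t. a (s + t)) *\<^sub>R e'"
    by (simp add: lt_tens[OF ca] m_prop(3)[OF ufun_shift[OF a]])
  then have "\<bar>m (\<lambda>t. a (s + t))\<bar> = 1" using s ne by simp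
  then show ?thesis using m_prop(1)[OF ufun_shift[OF a]] by auto
qed

definition conc :: "'g set \<Rightarrow> bool" where
  "conc C \<longleftrightarrow> (\<forall>c. ufun c \<longrightarrow> (\<forall>t\<in>C. c t = 0) \<longrightarrow> m c = 0)"

lemma m_shift_le:
  assumes c: "ufun c" and e: "0 \<le> \<epsilon>" "\<epsilon> \<le> 1"
  shows "ufun (\<lambda>t. max (c t - \<epsilon>) 0) \<and> m c \<le> m (\<lambda>t. max (c t - \<epsilon>) 0) + \<epsilon>"
proof -
  have cc: "continuous_on UNIV c" using c by (simp add: ufun_def)
  have ct: "0 \<le> c t" "c t \<le> 1" for t using c by (simp_all add: ufun_def)
  have u1: "ufun (\<lambda>t. max (c t - \<epsilon>) 0)" unfolding ufun_def
  proof (intro conjI allI)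
    show "continuous_on UNIV (\<lambda>t. max (c t - \<epsilon>) 0)" using cc by (intro continuous_intros)
    fix t show "0 \<le> max (c t - \<epsilon>) 0" by simp
    show "max (c t - \<epsilon>) 0 \<le> 1" using ct[of t] e by simp
  qed
  have u2: "ufun (\<lambda>t. max (c t - \<epsilon>) 0 + \<epsilon>)" unfolding ufun_def
  proof (intro conjI allI)
    show "continuous_on UNIV (\<lambda>t. max (c t - \<epsilon>) 0 + \<epsilon>)" using cc by (intro continuous_intros)
    fix t show "0 \<le> max (c t - \<epsilon>) 0 + \<epsilon>" using e by simp
    show "max (c t - \<epsilon>) 0 + \<epsilon> \<le> 1" using ct[of t] e by simp
  qed
  have "m c \<le> m (\<lambda>t. max (c t - \<epsilon>) 0 + \<epsilon>)" by (rule m_mono[OF c u2]) simp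
  also have "\<dots> = m (\<lambda>t. max (c t - \<epsilon>) 0) + m (\<lambda>_. \<epsilon>)"
    by (rule m_add[OF u1 ufun_const[OF e] u2])
  also have "\<dots> = m (\<lambda>t. max (c t - \<epsilon>) 0) + \<epsilon>" using m_const[OF e] by simp
  finally show ?thesis using u1 by simp
qed

lemma m_le_eps:
  assumes "\<And>\<epsilon>. 0 < \<epsilon> \<Longrightarrow> \<epsilon> \<le> 1 \<Longrightarrow> m c \<le> \<epsilon>" "ufun c"
  shows "m c = 0"
proof -
  have "m c \<le> 0"
  proof (rule ccontr)
    assume "\<not> m c \<le> 0"
    then have "m c \<le> min (m c / 2) 1" using assms(1)[of "min (m c / 2) 1"] by simp
    then show False using \<open>\<not> m c \<le> 0\<close> by linarith
  qed
  then show ?thesis using m_prop(1)[OF assms(2)] by simp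
qed

lemma conc_le:
  assumes K: "conc K" and c: "ufun c" and le: "\<And>t. t \<in> K \<Longrightarrow> c t \<le> \<epsilon>" and e: "0 \<le> \<epsilon>" "\<epsilon> \<le> 1"
  shows "m c \<le> \<epsilon>"
proof -
  have h: "ufun (\<lambda>t. max (c t - \<epsilon>) 0)" "m c \<le> m (\<lambda>t. max (c t - \<epsilon>) 0) + \<epsilon>"
    using m_shift_le[OF c e] by auto
  have "m (\<lambda>t. max (c t - \<epsilon>) 0) = 0"
    using K h(1) le unfolding conc_def by auto
  then show ?thesis using h(2) by simp
qed

lemma conc_empty: "\<not> conc {}"
  unfolding conc_def using m_const[of 1] ufun_const[of 1] by auto

lemma conc_UNIV: "conc UNIV"
  unfolding conc_def
proof (intro allI impI)
  fix c :: "'g \<Rightarrow> real" assume "ufun c" "\<forall>t\<in>UNIV. c t = 0"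
  then have "c = (\<lambda>_. 0)" by auto
  then show "m c = 0" using m_const[of 0] by simp
qed

lemma conc_Int:
  assumes C1: "closed C1" "conc C1" and C2: "closed C2" "conc C2"
  shows "conc (C1 \<inter> C2)"
  unfolding conc_def
proof (intro allI impI)
  fix c assume c: "ufun c" and z: "\<forall>t\<in>C1 \<inter> C2. c t = 0"
  have cc: "continuous_on UNIV c" using c by (simp add: ufun_def)
  show "m c = 0"
  proof (rule m_le_eps[OF _ c])
    fix \<epsilon> :: real assume e: "0 < \<epsilon>" "\<epsilon> \<le> 1"
    define D where "D = {t. \<epsilon> \<le> c t}"
    have cD: "closed D" unfolding D_def by (rule closed_Collect_le[OF continuous_on_const cc])
    have disj: "(D \<inter> C1) \<inter> (D \<inter> C2) = {}" using z e by (auto simp: D_def)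
    obtain u :: "'g \<Rightarrow> real" where u: "continuous_on UNIV u" "\<And>t. 0 \<le> u t \<and> u t \<le> 1"
      "\<And>t. t \<in> D \<inter> C1 \<Longrightarrow> u t = 0" "\<And>t. t \<in> D \<inter> C2 \<Longrightarrow> u t = 1"
      using urysohn_cpt[OF cpt closed_Int[OF cD C1(1)] closed_Int[OF cD C2(1)] disj] by blast
    define c' where "c' = (\<lambda>t. max (c t - \<epsilon>) 0)"
    have h: "ufun c'" "m c \<le> m c' + \<epsilon>" using m_shift_le[OF c] e unfolding c'_def by auto
    have cc': "continuous_on UNIV c'" using h(1) by (simp add: ufun_def)
    have c'01: "0 \<le> c' t" "c' t \<le> 1" for t using h(1) by (simp_all add: ufun_def)
    define p where "p = (\<lambda>t. u t * c' t)"
    define q where "q = (\<lambda>t. (1 - u t) * c' t)"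
    have up: "ufun p" unfolding ufun_def p_def
    proof (intro conjI allI)
      show "continuous_on UNIV (\<lambda>t. u t * c' t)" using u(1) cc' by (intro continuous_intros)
    next
      fix t show "0 \<le> u t * c' t" using u(2)[of t] c'01[of t] by simp
      show "u t * c' t \<le> 1" using u(2)[of t] c'01[of t] by (simp add: mult_le_one)
    qed
    have uq: "ufun q" unfolding ufun_def q_def
    proof (intro conjI allI)
      show "continuous_on UNIV (\<lambda>t. (1 - u t) * c' t)" using u(1) cc' by (intro continuous_intros)
    next
      fix t show "0 \<le> (1 - u t) * c' t" using u(2)[of t] c'01[of t] by simp
      show "(1 - u t) * c' t \<le> 1" using u(2)[of t] c'01[of t] by (simp add: mult_le_one)
    qed
    have pq: "(\<lambda>t. p t + q t) = c'" by (auto simp: p_def q_def algebra_simps)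
    have p0: "m p = 0" using C1(2) up unfolding conc_def
    proof (elim allE impE)
      show "\<forall>t\<in>C1. p t = 0"
      proof
        fix t assume t: "t \<in> C1"
        show "p t = 0"
        proof (cases "\<epsilon> \<le> c t")
          case True then show ?thesis using u(3)[of t] t by (simp add: p_def D_def)
        next
          case False then show ?thesis by (simp add: p_def c'_def)
        qed
      qed
    qed auto
    have q0: "m q = 0" using C2(2) uq unfolding conc_def
    proof (elim allE impE)
      show "\<forall>t\<in>C2. q t = 0"
      proof
        fix t assume t: "t \<in> C2"
        show "q t = 0"
        proof (cases "\<epsilon> \<le> c t")
          case True then show ?thesis using u(4)[of t] t by (simp add: q_def D_def)
        next
          case False then show ?thesis by (simp add: q_def c'_def)
        qed
      qed
    qed auto
    have "m c' = m p + m q" using m_add[OF up uq] pq h(1) by simp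
    then show "m c \<le> \<epsilon>" using h(2) p0 q0 by simp
  qed
qed

lemma conc_Inter:
  assumes "finite F" "\<And>C. C \<in> F \<Longrightarrow> closed C \<and> conc C"
  shows "closed (\<Inter>F) \<and> conc (\<Inter>F)"
  using assms
proof (induction F rule: finite_induct)
  case empty then show ?case using conc_UNIV by simp
next
  case (insert C F)
  then have "closed C" "conc C" "closed (\<Inter>F)" "conc (\<Inter>F)" by auto
  then show ?case using conc_Int by auto
qed

lemma separation:
  assumes pq: "p \<noteq> (q::'g)"
  shows "\<exists>C. closed C \<and> conc C \<and> \<not> (p \<in> C \<and> q \<in> C)"
proof -
  define d where "d = -p + q"
  have dnz: "d \<noteq> 0"
  proof
    assume "d = 0"
    moreover have "p + d = q" by (simp add: d_def)
    ultimately show False using pq by simp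
  qed
  define h where "h = (\<lambda>z::'g \<times> 'g. - snd z + fst z)"
  have ch: "continuous_on UNIV h" unfolding h_def by (intro continuous_intros)
  have "open (h -` (- {d}))" by (rule open_vimage[OF _ ch]) (simp add: open_Compl)
  moreover have "(0,0) \<in> h -` (- {d})" using dnz by (simp add: h_def)
  ultimately obtain A B where AB: "open A" "open B" "(0,0) \<in> A \<times> B" "A \<times> B \<subseteq> h -` (- {d})"
    by (rule open_prod_elim)
  define W where "W = A \<inter> B"
  have oW: "open W" and W0: "0 \<in> W" using AB by (auto simp: W_def)
  have Wd: "- v + u \<noteq> d" if "u \<in> W" "v \<in> W" for u v
  proof -
    have "(u, v) \<in> A \<times> B" using that by (simp add: W_def)
    then have "(u, v) \<in> h -` (- {d})" using AB(4) by blast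
    then show ?thesis by (simp add: h_def)
  qed
  have dj: "(- W) \<inter> {0} = {}" using W0 by auto
  obtain a0 :: "'g \<Rightarrow> real" where a0: "continuous_on UNIV a0" "\<And>t. 0 \<le> a0 t \<and> a0 t \<le> 1"
    "\<And>t. t \<in> - W \<Longrightarrow> a0 t = 0" "\<And>t. t \<in> {0} \<Longrightarrow> a0 t = 1"
    using urysohn_cpt[OF cpt _ closed_singleton dj] oW by (auto simp: closed_Compl)
  define a where "a = (\<lambda>t. max 0 (2 * a0 t - 1))"
  have ua: "ufun a" unfolding ufun_def
  proof (intro conjI allI)
    show "continuous_on UNIV a" unfolding a_def using a0(1) by (intro continuous_intros)
    fix t show "0 \<le> a t" by (simp add: a_def)
    show "a t \<le> 1" using a0(2)[of t] by (simp add: a_def)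
  qed
  have "a 0 = 1" using a0(4)[of 0] by (simp add: a_def)
  then obtain s where s: "m (\<lambda>t. a (s + t)) = 1" using ISO[OF ua] by blast
  define C where "C = {t. 1/2 \<le> a0 (s + t)}"
  have cC: "closed C" unfolding C_def by (rule closed_Collect_le[OF continuous_on_const cont_shift[OF a0(1)]])
  have concC: "conc C" unfolding conc_def
  proof (intro allI impI)
    fix c assume c: "ufun c" and z: "\<forall>t\<in>C. c t = 0"
    have le: "c t \<le> 1 - a (s + t)" for t
    proof (cases "t \<in> C")
      case True then show ?thesis using z ua by (simp add: ufun_def)
    next
      case False
      then have "a (s + t) = 0" by (simp add: C_def a_def)
      then show ?thesis using c by (simp add: ufun_def)
    qed
    have "m c \<le> m (\<lambda>t. 1 - a (s + t))"
      by (rule m_mono[OF c ufun_compl[OF ufun_shift[OF ua]] le])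
    also have "\<dots> = 0" using m_compl[OF ufun_shift[OF ua]] s by simp
    finally show "m c = 0" using m_prop(1)[OF c] by simp
  qed
  have "\<not> (p \<in> C \<and> q \<in> C)"
  proof
    assume "p \<in> C \<and> q \<in> C"
    then have "1/2 \<le> a0 (s + p)" "1/2 \<le> a0 (s + q)" by (auto simp: C_def)
    then have "s + p \<in> W" "s + q \<in> W" using a0(3) by force+
    then have "- (s + p) + (s + q) \<noteq> d" by (rule Wd[rotated])
    moreover have "- (s + p) + (s + q) = d" by (simp only: d_def minus_add add.assoc minus_add_cancel)
    ultimately show False by simp
  qed
  then show ?thesis using cC concC by blast
qed

lemma exists_point: "\<exists>y. conc {y}"
proof -
  define F where "F = {C. closed C \<and> conc C}"
  have "UNIV \<inter> \<Inter>F \<noteq> {}"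
  proof (rule compact_imp_fip[OF cpt])
    show "\<And>T. T \<in> F \<Longrightarrow> closed T" by (simp add: F_def)
    fix F' assume "finite F'" "F' \<subseteq> F"
    then have "conc (\<Inter>F')" using conc_Inter[of F'] by (auto simp: F_def)
    then show "UNIV \<inter> \<Inter>F' \<noteq> {}" using conc_empty by auto
  qed
  then obtain y where y: "\<And>C. C \<in> F \<Longrightarrow> y \<in> C" by auto
  have "conc {y}" unfolding conc_def
  proof (intro allI impI)
    fix c assume c: "ufun c" and cy: "\<forall>t\<in>{y}. c t = 0"
    have cc: "continuous_on UNIV c" using c by (simp add: ufun_def)
    show "m c = 0"
    proof (rule m_le_eps[OF _ c])
      fix \<epsilon> :: real assume e: "0 < \<epsilon>" "\<epsilon> \<le> 1"
      define Op where "Op = {t. c t < \<epsilon>}"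
      have oOp: "open Op" unfolding Op_def by (rule open_Collect_less[OF cc continuous_on_const])
      have yOp: "y \<in> Op" using cy e by (simp add: Op_def)
      have "\<exists>F''. finite F'' \<and> F'' \<subseteq> insert (-Op) F \<and> \<Inter>F'' = {}"
      proof (rule ccontr)
        assume na: "\<not> ?thesis"
        have "UNIV \<inter> \<Inter>(insert (-Op) F) \<noteq> {}"
        proof (rule compact_imp_fip[OF cpt])
          show "\<And>T. T \<in> insert (-Op) F \<Longrightarrow> closed T" using oOp by (auto simp: F_def closed_Compl)
          fix F' assume "finite F'" "F' \<subseteq> insert (-Op) F"
          then show "UNIV \<inter> \<Inter>F' \<noteq> {}" using na by auto
        qed
        then obtain q where q: "q \<notin> Op" "\<And>C. C \<in> F \<Longrightarrow> q \<in> C" by auto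
        have "y \<noteq> q" using q(1) yOp by auto
        then obtain C where "closed C" "conc C" "\<not> (y \<in> C \<and> q \<in> C)" using separation by blast
        then show False using y q(2) by (auto simp: F_def)
      qed
      then obtain F'' where F'': "finite F''" "F'' \<subseteq> insert (-Op) F" "\<Inter>F'' = {}" by blast
      define F' where "F' = F'' - {-Op}"
      have F': "finite F'" "F' \<subseteq> F" using F'' by (auto simp: F'_def)
      have K: "closed (\<Inter>F') \<and> conc (\<Inter>F')" using conc_Inter[OF F'(1)] F'(2) by (auto simp: F_def)
      have inO: "t \<in> Op" if "t \<in> \<Inter>F'" for t
      proof (rule ccontr)
        assume "t \<notin> Op"
        then have "t \<in> \<Inter>F''" using that by (auto simp: F'_def)
        then show False using F''(3) by simp
      qed
      show "m c \<le> \<epsilon>"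
        by (rule conc_le[of "\<Inter>F'"]) (use K c inO e in \<open>auto simp: Op_def less_imp_le\<close>)
    qed
  qed
  then show ?thesis by blast
qed

lemma point_eval: "\<exists>y. \<forall>f. Phi f = apply_bcontfun f y"
proof -
  obtain y where y: "conc {y}" using exists_point by blast
  have zero: "Phi f = 0" if fy: "apply_bcontfun f y = 0" for f
  proof -
    have "norm (Phi f) \<le> 0 + \<epsilon>" if e: "0 < \<epsilon>" for \<epsilon>
    proof -
      define C where "C = {t. \<epsilon> \<le> norm (apply_bcontfun f t)}"
      have cC: "closed C" unfolding C_def
        by (rule closed_Collect_le[OF continuous_on_const continuous_on_norm[OF continuous_on_apply_bcontfun]])
      have dj: "{y} \<inter> C = {}" using fy e by (auto simp: C_def)
      obtain a :: "'g \<Rightarrow> real" where a: "continuous_on UNIV a" "\<And>t. 0 \<le> a t \<and> a t \<le> 1"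
        "\<And>t. t \<in> {y} \<Longrightarrow> a t = 0" "\<And>t. t \<in> C \<Longrightarrow> a t = 1"
        using urysohn_cpt[OF cpt closed_singleton cC dj] by blast
      have ua: "ufun a" using a by (simp add: ufun_def)
      have ma: "m a = 0" using y ua a(3) unfolding conc_def by auto
      define b where "b = (\<lambda>t. 1 - a t)"
      have ub: "ufun b" unfolding b_def by (rule ufun_compl[OF ua])
      have cb: "continuous_on UNIV b" using ub by (simp add: ufun_def)
      have split: "f = mulf a f + mulf b f"
        by (rule bcontfun_eqI) (simp add: mulf_apply[OF a(1)] mulf_apply[OF cb], simp add: b_def scaleR_diff_left)
      have n1: "norm (Phi (mulf a f)) \<le> 0" using M3[OF ua, of f] ma by simp
      have nbf: "norm (mulf b f) \<le> \<epsilon>"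
      proof (rule norm_bound)
        fix t
        show "norm (apply_bcontfun (mulf b f) t) \<le> \<epsilon>"
        proof (cases "t \<in> C")
          case True
          have "b t = 0" using a(4)[OF True] by (simp add: b_def)
          then show ?thesis using e by (simp add: mulf_apply[OF cb])
        next
          case False
          then have "norm (apply_bcontfun f t) \<le> \<epsilon>" by (simp add: C_def)
          moreover have "\<bar>b t\<bar> \<le> 1" using ub by (simp add: ufun_def)
          ultimately have "\<bar>b t\<bar> * norm (apply_bcontfun f t) \<le> 1 * \<epsilon>"
            by (intro mult_mono) auto
          then show ?thesis by (simp add: mulf_apply[OF cb])
        qed
      qed
      have "norm (Phi f) = norm (Phi (mulf a f) + Phi (mulf b f))" by (subst split) (simp add: Phi_add)
      also have "\<dots> \<le> norm (Phi (mulf a f)) + norm (Phi (mulf b f))" by (rule norm_triangle_ineq)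
      also have "\<dots> \<le> 0 + \<epsilon>" using n1 nb[of "mulf b f"] nbf by simp
      finally show ?thesis .
    qed
    then have "norm (Phi f) \<le> 0" by (rule field_le_epsilon)
    then show ?thesis by simp
  qed
  show ?thesis
  proof (intro exI allI)
    fix f :: "'g \<Rightarrow>\<^sub>C 'x"
    define g where "g = f - const_bcontfun (apply_bcontfun f y)"
    have "apply_bcontfun g y = 0" by (simp add: g_def)
    then have "Phi g = 0" by (rule zero)
    then show "Phi f = apply_bcontfun f y" by (simp add: g_def Phi_diff cst)
  qed
qed

end

lemma norm_const_bcontfun:
  "norm (const_bcontfun x :: 'g::topological_space \<Rightarrow>\<^sub>C 'x::real_normed_vector) = norm x"
proof (rule antisym)
  show "norm (const_bcontfun x :: 'g \<Rightarrow>\<^sub>C 'x) \<le> norm x" by (rule norm_bound) simp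
  show "norm x \<le> norm (const_bcontfun x :: 'g \<Rightarrow>\<^sub>C 'x)"
    using norm_bounded[of "const_bcontfun x :: 'g \<Rightarrow>\<^sub>C 'x" undefined] by simp
qed

theorem mainTheorem5:
  fixes T :: "('g::{topological_group_add, t2_space} \<Rightarrow>\<^sub>C 'x::banach) \<Rightarrow> ('g \<Rightarrow>\<^sub>C 'x)"
  assumes G_compact: "compact (UNIV :: 'g set)"
    and X_separable: "separable_space (euclidean :: 'x topology)"
    and dual_strictly_convex: "strictly_convex TYPE('x \<Rightarrow>\<^sub>L real)"
    and T_mult: "left_multiplier T"
    and T_isometric: "\<forall>f. norm (T f) = norm f"
    and T_invertible: "bij T"
  shows "\<exists>U y. bounded_linear U \<and> bij U \<and> (\<forall>x. norm (U x) = norm x) \<and>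
           (\<forall>f s. apply_bcontfun (T f) s = U (apply_bcontfun f (s + y)))"
proof -
  have Tlt: "T (left_transl s f) = left_transl s (T f)" for s f
    using T_mult by (simp add: left_multiplier_def)
  have lt0: "apply_bcontfun (T f) s = apply_bcontfun (T (left_transl s f)) 0" for f s
    by (simp add: Tlt lt_apply)
  have blT: "bounded_linear T" using T_mult by (simp add: left_multiplier_def)
  have linT: "linear T" using blT by (rule bounded_linear.linear)
  have injT: "inj T" using T_invertible by (simp add: bij_def)
  have surjT: "surj T" using T_invertible by (simp add: bij_def)
  have lt_const: "left_transl s (const_bcontfun x) = (const_bcontfun x :: 'g \<Rightarrow>\<^sub>C 'x)" for s x
    by (rule bcontfun_eqI) (simp add: lt_apply)
  show ?thesis
  proof (cases "\<exists>e::'x. e \<noteq> 0")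
    case False
    then have z: "\<And>x::'x. x = 0" by blast
    show ?thesis
    proof (intro exI conjI allI)
      show "bounded_linear (\<lambda>x::'x. x)" by (rule bounded_linear_ident)
      show "bij (\<lambda>x::'x. x)" by (simp add: bij_def inj_on_def)
      fix x :: 'x show "norm x = norm x" by simp
    next
      fix f s show "apply_bcontfun (T f) s = apply_bcontfun f (s + 0)" by (rule z[THEN trans, OF z[symmetric]])
    qed
  next
    case True
    define U where "U x = apply_bcontfun (T (const_bcontfun x)) 0" for x
    have constT: "T (const_bcontfun x) = const_bcontfun (U x)" for x
    proof (rule bcontfun_eqI)
      fix s show "apply_bcontfun (T (const_bcontfun x)) s = apply_bcontfun (const_bcontfun (U x)) s"
        using lt0[of "const_bcontfun x" s] by (simp add: lt_const U_def)
    qed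
    have cadd: "const_bcontfun (x + y) = (const_bcontfun x + const_bcontfun y :: 'g \<Rightarrow>\<^sub>C 'x)" for x y
      by (rule bcontfun_eqI) simp
    have cscl: "const_bcontfun (c *\<^sub>R x) = (c *\<^sub>R const_bcontfun x :: 'g \<Rightarrow>\<^sub>C 'x)" for c x
      by (rule bcontfun_eqI) simp
    have linU: "linear U"
    proof (rule linearI)
      fix x y show "U (x + y) = U x + U y" by (simp add: U_def cadd linear_add[OF linT])
    next
      fix c x show "U (c *\<^sub>R x) = c *\<^sub>R U x" by (simp add: U_def cscl linear_scale[OF linT])
    qed
    have nU: "norm (U x) = norm x" for x
    proof -
      have "norm (U x) = norm (const_bcontfun (U x) :: 'g \<Rightarrow>\<^sub>C 'x)" by (simp add: norm_const_bcontfun)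
      also have "\<dots> = norm (T (const_bcontfun x))" by (simp add: constT)
      also have "\<dots> = norm x" using T_isometric by (simp add: norm_const_bcontfun)
      finally show ?thesis .
    qed
    have blU: "bounded_linear U"
    proof (rule bounded_linear_intro[where K=1])
      fix x y show "U (x + y) = U x + U y" using linU by (rule linear_add)
    next
      fix r x show "U (r *\<^sub>R x) = r *\<^sub>R U x" using linU by (rule linear_scale)
    next
      fix x show "norm (U x) \<le> norm x * 1" by (simp add: nU)
    qed
    have injU: "inj U"
    proof (rule injI)
      fix x y assume "U x = U y"
      then have "U (x - y) = 0" by (simp add: linear_diff[OF linU])
      then have "norm (x - y) = 0" using nU[of "x - y"] by simp
      then show "x = y" by simp
    qed
    have surjU: "surj U"
    proof -
      have "z \<in> range U" for z
      proof -
        obtain h where h: "T h = const_bcontfun z" using surjT by (metis surjD)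
        have "left_transl g h = h" for g
        proof -
          have "T (left_transl g h) = T h" by (simp add: Tlt h lt_const)
          then show ?thesis using injT by (simp add: inj_eq)
        qed
        then have "h = const_bcontfun (apply_bcontfun h 0)"
          by (intro bcontfun_eqI) (metis add.right_neutral const_bcontfun.rep_eq lt_apply)
        then have "U (apply_bcontfun h 0) = z" by (metis U_def h const_bcontfun.rep_eq)
        then show ?thesis by (metis rangeI)
      qed
      then show ?thesis by blast
    qed
    have bijU: "bij U" using injU surjU by (simp add: bij_def)
    define V where "V = inv U"
    have UV: "U (V z) = z" for z unfolding V_def using surjU by (simp add: surj_f_inv_f)
    have VU: "V (U x) = x" for x unfolding V_def using injU by (simp add: inv_f_f)
    define Phi where "Phi f = V (apply_bcontfun (T f) 0)" for f
    have nV: "norm (V z) = norm z" for z by (metis UV nU)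
    have TU: "apply_bcontfun (T f) s = U (Phi (left_transl s f))" for f s
      by (simp add: Phi_def UV lt0[of f s])
    have linPhi: "linear Phi"
    proof (rule linearI)
      fix f g
      have "U (Phi f + Phi g) = U (Phi (f + g))"
        by (simp add: linear_add[OF linU] UV Phi_def linear_add[OF linT])
      then show "Phi (f + g) = Phi f + Phi g" using injU by (simp add: inj_eq)
    next
      fix c f
      have "U (c *\<^sub>R Phi f) = U (Phi (c *\<^sub>R f))"
        by (simp add: linear_scale[OF linU] UV Phi_def linear_scale[OF linT])
      then show "Phi (c *\<^sub>R f) = c *\<^sub>R Phi f" using injU by (simp add: inj_eq)
    qed
    interpret P: phictx Phi
    proof
      show "compact (UNIV :: 'g set)" by (rule G_compact)
    next
      fix f g show "Phi (f + g) = Phi f + Phi g" using linPhi by (rule linear_add)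
    next
      fix r f show "Phi (r *\<^sub>R f) = r *\<^sub>R Phi f" using linPhi by (rule linear_scale)
    next
      fix f show "norm (Phi f) \<le> norm f"
        using norm_bounded[of "T f" 0] T_isometric by (simp add: Phi_def nV)
    next
      fix x show "Phi (const_bcontfun x) = x"
        by (simp add: Phi_def constT VU)
    next
      fix f
      obtain s0 where s0: "\<forall>t. norm (apply_bcontfun (T f) t) \<le> norm (apply_bcontfun (T f) s0)"
        using continuous_attains_sup[OF G_compact, of "\<lambda>t. norm (apply_bcontfun (T f) t)"]
        by (auto intro!: continuous_intros)
      have "norm (T f) \<le> norm (apply_bcontfun (T f) s0)" using s0 by (intro norm_bound) auto
      then have "norm (T f) = norm (apply_bcontfun (T f) s0)" using norm_bounded[of "T f" s0] by simp
      then have "norm (Phi (left_transl s0 f)) = norm f"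
        using T_isometric by (simp add: Phi_def nV lt0[of f s0, symmetric])
      then show "\<exists>s. norm (Phi (left_transl s f)) = norm f" by blast
    next
      show "strictly_convex TYPE('x \<Rightarrow>\<^sub>L real)" by (rule dual_strictly_convex)
    next
      show "\<exists>e::'x. e \<noteq> 0" by (rule True)
    qed
    obtain y where y: "\<And>f. Phi f = apply_bcontfun f y" using P.point_eval by blast
    have "apply_bcontfun (T f) s = U (apply_bcontfun f (s + y))" for f s
      by (simp add: TU y lt_apply)
    then show ?thesis using blU bijU nU by blast
  qed
qed

end
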